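(* Let $\mathcal{M}$ be a relational structure with domain $M$ and $\mathcal{L}$ a logic. For every $\mathcal{M}$-$\mathcal{L}$-MSO sentence $\psi$ (over $\omega$-words over $M^n$) there exists an $\mathcal{M}$-$\mathcal{L}$-Büchi automaton $\mathcal{B}$ with $L(\psi)=L(\mathcal{B})$.
   Context: $\mathcal{L}$ is a logic over the signature of $\mathcal{M}$ (e.g. FO, MSO) closed under Boolean connectives and first-order existential quantification; $\Phi_n$ is the set of $\mathcal{L}$-formulas with $n$ free variables, and $\phi^{\mathcal{M}}=\{\bar m\in M^n\mid\mathcal{M}\models\phi[\bar m]\}$. $\mathcal{M}$-$\mathcal{L}$-MSO: given a finite set $\Phi\subseteq\Phi_n$, an $\omega$-word $\alpha=\langle\alpha_1,\ldots,\alpha_n\rangle$ over $M^n$ (whose $i$-th letter is $(\alpha_1(i),\ldots,\alpha_n(i))$) is identified with the structure $(\mathbb{N},0,<,S,(P_\phi)_{\phi\in\Phi})$ with the usual $0,<$, successor $S$, and $P_\phi=\{i\mid\alpha(i)\in\phi^{\mathcal{M}}\}$; $\mathcal{M}$-$\mathcal{L}$-MSO sentences are monadic second-order sentences over such structures (first-order variables over $\mathbb{N}$, second-order quantification over sets of positions / letter sequences), and $L(\psi)$ is the set of $\omega$-words over $M^n$ whose associated structure satisfies $\psi$. An $\mathcal{M}$-$\mathcal{L}$-Büchi automaton over $M^n$ is $\mathcal{B}=(Q,M^n,q_0,\Delta,F)$ with finite state set $Q$, initial state $q_0$, $F\subseteq Q$, finite $\Delta\subseteq Q\times\Phi_n\times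 Q$; a run on $\alpha$ is a state sequence starting at $q_0$ where each step $\rho(i)\to\rho(i+1)$ uses some $(\rho(i),\phi,\rho(i+1))\in\Delta$ with $\mathcal{M}\models\phi[\alpha(i)]$; $L(\mathcal{B})$ is the set of $\omega$-words having a run visiting $F$ infinitely often. *)

theory Defs
  imports Main
begin

text \<open>
  Formulas have type 'f; Phi n is the set of formulas with n free variables
  (Phi_n); sat phi ms means M |= phi[ms] for a tuple ms (a list of length n).
\<close>

definition tuples :: "nat \<Rightarrow> 'm list set" where
  "tuples n = {ms. length ms = n}"

definition logic_closed :: "(nat \<Rightarrow> 'f set) \<Rightarrow> ('f \<Rightarrow> 'm list \<Rightarrow> bool) \<Rightarrow> bool" where
  "logic_closed Phi sat \<longleftrightarrow>
     (\<forall>n. Phi n \<noteq> {}) \<and>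
     (\<forall>n. \<forall>\<phi>\<in>Phi n. \<exists>\<chi>\<in>Phi n. \<forall>ms\<in>tuples n. sat \<chi> ms \<longleftrightarrow> \<not> sat \<phi> ms) \<and>
     (\<forall>n. \<forall>\<phi>\<in>Phi n. \<forall>\<psi>\<in>Phi n. \<exists>\<chi>\<in>Phi n. \<forall>ms\<in>tuples n. sat \<chi> ms \<longleftrightarrow> sat \<phi> ms \<and> sat \<psi> ms) \<and>
     (\<forall>n. \<forall>\<phi>\<in>Phi n. \<forall>\<psi>\<in>Phi n. \<exists>\<chi>\<in>Phi n. \<forall>ms\<in>tuples n. sat \<chi> ms \<longleftrightarrow> sat \<phi> ms \<or> sat \<psi> ms) \<and>
     (\<forall>n. \<forall>\<phi>\<in>Phi (Suc n). \<exists>\<chi>\<in>Phi n. \<forall>ms\<in>tuples n. sat \<chi> ms \<longleftrightarrow> (\<exists>m. sat \<phi> (ms @ [m])))"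

definition words :: "nat \<Rightarrow> (nat \<Rightarrow> 'm list) set" where
  "words n = {\<alpha>. \<forall>i. length (\<alpha> i) = n}"

text \<open>MSO formulas over (N,0,<,S,(P_phi)_phi); first-order variables and
  second-order (set) variables are named by naturals, in separate name spaces.\<close>
datatype 'f mso =
    Zero nat
  | Eq nat nat
  | Less nat nat
  | Succ nat nat
  | Pred 'f nat
  | Mem nat nat
  | Neg "'f mso"
  | Conj "'f mso" "'f mso"
  | Disj "'f mso" "'f mso"
  | Ex1 nat "'f mso"
  | All1 nat "'f mso"
  | Ex2 nat "'f mso"
  | All2 nat "'f mso"

primrec fv1 :: "'f mso \<Rightarrow> nat set" where
  "fv1 (Zero x) = {x}"
| "fv1 (Eq x y) = {x, y}"
| "fv1 (Less x y) = {x, y}"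
| "fv1 (Succ x y) = {x, y}"
| "fv1 (Pred \<phi> x) = {x}"
| "fv1 (Mem x X) = {x}"
| "fv1 (Neg a) = fv1 a"
| "fv1 (Conj a b) = fv1 a \<union> fv1 b"
| "fv1 (Disj a b) = fv1 a \<union> fv1 b"
| "fv1 (Ex1 x a) = fv1 a - {x}"
| "fv1 (All1 x a) = fv1 a - {x}"
| "fv1 (Ex2 X a) = fv1 a"
| "fv1 (All2 X a) = fv1 a"

primrec fv2 :: "'f mso \<Rightarrow> nat set" where
  "fv2 (Zero x) = {}"
| "fv2 (Eq x y) = {}"
| "fv2 (Less x y) = {}"
| "fv2 (Succ x y) = {}"
| "fv2 (Pred \<phi> x) = {}"
| "fv2 (Mem x X) = {X}"
| "fv2 (Neg a) = fv2 a"
| "fv2 (Conj a b) = fv2 a \<union> fv2 b"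
| "fv2 (Disj a b) = fv2 a \<union> fv2 b"
| "fv2 (Ex1 x a) = fv2 a"
| "fv2 (All1 x a) = fv2 a"
| "fv2 (Ex2 X a) = fv2 a - {X}"
| "fv2 (All2 X a) = fv2 a - {X}"

primrec preds :: "'f mso \<Rightarrow> 'f set" where
  "preds (Zero x) = {}"
| "preds (Eq x y) = {}"
| "preds (Less x y) = {}"
| "preds (Succ x y) = {}"
| "preds (Pred \<phi> x) = {\<phi>}"
| "preds (Mem x X) = {}"
| "preds (Neg a) = preds a"
| "preds (Conj a b) = preds a \<union> preds b"
| "preds (Disj a b) = preds a \<union> preds b"
| "preds (Ex1 x a) = preds a"
| "preds (All1 x a) = preds a"
| "preds (Ex2 X a) = preds a"
| "preds (All2 X a) = preds a"

definition mso_sentence :: "'f mso \<Rightarrow> bool" where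
  "mso_sentence \<psi> \<longleftrightarrow> fv1 \<psi> = {} \<and> fv2 \<psi> = {}"

text \<open>Satisfaction in the structure associated with alpha: P_phi = {i. M |= phi[alpha i]}.\<close>
primrec mso_sat :: "('f \<Rightarrow> 'm list \<Rightarrow> bool) \<Rightarrow> (nat \<Rightarrow> 'm list) \<Rightarrow>
    (nat \<Rightarrow> nat) \<Rightarrow> (nat \<Rightarrow> nat set) \<Rightarrow> 'f mso \<Rightarrow> bool" where
  "mso_sat sat \<alpha> I1 I2 (Zero x) = (I1 x = 0)"
| "mso_sat sat \<alpha> I1 I2 (Eq x y) = (I1 x = I1 y)"
| "mso_sat sat \<alpha> I1 I2 (Less x y) = (I1 x < I1 y)"
| "mso_sat sat \<alpha> I1 I2 (Succ x y) = (Suc (I1 x) = I1 y)"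
| "mso_sat sat \<alpha> I1 I2 (Pred \<phi> x) = sat \<phi> (\<alpha> (I1 x))"
| "mso_sat sat \<alpha> I1 I2 (Mem x X) = (I1 x \<in> I2 X)"
| "mso_sat sat \<alpha> I1 I2 (Neg a) = (\<not> mso_sat sat \<alpha> I1 I2 a)"
| "mso_sat sat \<alpha> I1 I2 (Conj a b) = (mso_sat sat \<alpha> I1 I2 a \<and> mso_sat sat \<alpha> I1 I2 b)"
| "mso_sat sat \<alpha> I1 I2 (Disj a b) = (mso_sat sat \<alpha> I1 I2 a \<or> mso_sat sat \<alpha> I1 I2 b)"
| "mso_sat sat \<alpha> I1 I2 (Ex1 x a) = (\<exists>i. mso_sat sat \<alpha> (I1(x := i)) I2 a)"
| "mso_sat sat \<alpha> I1 I2 (All1 x a) = (\<forall>i. mso_sat sat \<alpha> (I1(x := i)) I2 a)"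
| "mso_sat sat \<alpha> I1 I2 (Ex2 X a) = (\<exists>S. mso_sat sat \<alpha> I1 (I2(X := S)) a)"
| "mso_sat sat \<alpha> I1 I2 (All2 X a) = (\<forall>S. mso_sat sat \<alpha> I1 (I2(X := S)) a)"

text \<open>L(psi): omega-words over M^n whose structure satisfies the sentence psi
  (the assignments are irrelevant for sentences; we fix trivial ones).\<close>
definition mso_lang :: "('f \<Rightarrow> 'm list \<Rightarrow> bool) \<Rightarrow> nat \<Rightarrow> 'f mso \<Rightarrow> (nat \<Rightarrow> 'm list) set" where
  "mso_lang sat n \<psi> = {\<alpha> \<in> words n. mso_sat sat \<alpha> (\<lambda>_. 0) (\<lambda>_. {}) \<psi>}"

record ('f) buechi =
  states :: "nat set"
  init :: nat
  trans :: "(nat \<times> 'f \<times> nat) set"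
  final :: "nat set"

definition wf_buechi :: "(nat \<Rightarrow> 'f set) \<Rightarrow> nat \<Rightarrow> 'f buechi \<Rightarrow> bool" where
  "wf_buechi Phi n B \<longleftrightarrow> finite (states B) \<and> init B \<in> states B \<and> final B \<subseteq> states B \<and>
     finite (trans B) \<and> trans B \<subseteq> states B \<times> Phi n \<times> states B"

definition is_run :: "('f \<Rightarrow> 'm list \<Rightarrow> bool) \<Rightarrow> 'f buechi \<Rightarrow> (nat \<Rightarrow> 'm list) \<Rightarrow> (nat \<Rightarrow> nat) \<Rightarrow> bool" where
  "is_run sat B \<alpha> \<rho> \<longleftrightarrow> \<rho> 0 = init B \<and>
     (\<forall>i. \<exists>\<phi>. (\<rho> i, \<phi>, \<rho> (Suc i)) \<in> trans B \<and> sat \<phi> (\<alpha> i))"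

definition buechi_lang :: "('f \<Rightarrow> 'm list \<Rightarrow> bool) \<Rightarrow> nat \<Rightarrow> 'f buechi \<Rightarrow> (nat \<Rightarrow> 'm list) set" where
  "buechi_lang sat n B = {\<alpha> \<in> words n. \<exists>\<rho>. is_run sat B \<alpha> \<rho> \<and> (\<exists>\<^sub>\<infinity>i. \<rho> i \<in> final B)}"

end

theory Submission
  imports Defs "HOL-Library.Ramsey" "HOL-Library.Infinite_Set"
begin


definition seg :: "(nat \<Rightarrow> 'a) \<Rightarrow> nat \<Rightarrow> nat \<Rightarrow> 'a list" where
  "seg w i j = map w [i..<j]"

definition fct :: "(nat \<Rightarrow> nat) \<Rightarrow> bool" where
  "fct c \<longleftrightarrow> strict_mono c \<and> c 0 = 0"

definition congr :: "('a list \<Rightarrow> 'c) \<Rightarrow> bool" where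
  "congr k \<longleftrightarrow> (\<forall>u v y. k u = k v \<longrightarrow> k (u@y) = k (v@y) \<and> k (y@u) = k (y@v))"

definition saturates :: "('a list \<Rightarrow> 'c) \<Rightarrow> (nat \<Rightarrow> 'a) set \<Rightarrow> bool" where
  "saturates k L \<longleftrightarrow> (\<forall>w w' c c'. fct c \<longrightarrow> fct c' \<longrightarrow>
     (\<forall>j. k (seg w (c j) (c (Suc j))) = k (seg w' (c' j) (c' (Suc j)))) \<longrightarrow> (w \<in> L \<longleftrightarrow> w' \<in> L))"

definition recog :: "(nat \<Rightarrow> 'a) set \<Rightarrow> bool" where
  "recog L \<longleftrightarrow> (\<exists>k :: 'a list \<Rightarrow> 'a list set. finite (range k) \<and> congr k \<and> saturates k L)"

lemma recogI:
  fixes k :: "'a list \<Rightarrow> 'c"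
  assumes "finite (range k)" "congr k" "saturates k L"
  shows "recog L"
proof -
  define k' where "k' u = {v. k v = k u}" for u
  have eq: "k' u = k' v \<longleftrightarrow> k u = k v" for u v
    unfolding k'_def by (metis (mono_tags) mem_Collect_eq)
  have "range k' = (\<lambda>c. {v. k v = c}) ` range k" unfolding k'_def by auto
  hence "finite (range k')" using assms(1) by simp
  moreover have "congr k'" using assms(2) unfolding congr_def eq by blast
  moreover have "saturates k' L" using assms(3) unfolding saturates_def eq by blast
  ultimately show ?thesis unfolding recog_def by blast
qed

lemma recog_compl: "recog L \<Longrightarrow> recog (- L)"
  unfolding recog_def saturates_def by blast

lemma recog_inter:
  assumes "recog L1" "recog L2" shows "recog (L1 \<inter> L2)"
proof -
  obtain k1 :: "'a list \<Rightarrow> 'a list set" where k1: "finite (range k1)" "congr k1" "saturates k1 L1"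
    using assms(1) unfolding recog_def by blast
  obtain k2 :: "'a list \<Rightarrow> 'a list set" where k2: "finite (range k2)" "congr k2" "saturates k2 L2"
    using assms(2) unfolding recog_def by blast
  define k where "k u = (k1 u, k2 u)" for u
  have "range k \<subseteq> range k1 \<times> range k2" unfolding k_def by auto
  hence "finite (range k)" using k1(1) k2(1) by (meson finite_SigmaI finite_subset)
  moreover have "congr k" unfolding congr_def
  proof (intro allI impI)
    fix u v y assume "k u = k v"
    hence "k1 u = k1 v" "k2 u = k2 v" unfolding k_def by auto
    thus "k (u @ y) = k (v @ y) \<and> k (y @ u) = k (y @ v)"
      using k1(2) k2(2) unfolding congr_def k_def by (metis (no_types))
  qed
  moreover have "saturates k (L1 \<inter> L2)" unfolding saturates_def
  proof (intro allI impI)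
    fix w w' c c' assume h: "fct c" "fct c'" "\<forall>j. k (seg w (c j) (c (Suc j))) = k (seg w' (c' j) (c' (Suc j)))"
    have "\<forall>j. k1 (seg w (c j) (c (Suc j))) = k1 (seg w' (c' j) (c' (Suc j)))"
         "\<forall>j. k2 (seg w (c j) (c (Suc j))) = k2 (seg w' (c' j) (c' (Suc j)))"
      using h(3) unfolding k_def by simp_all
    hence "w \<in> L1 \<longleftrightarrow> w' \<in> L1" "w \<in> L2 \<longleftrightarrow> w' \<in> L2"
      using k1(3) k2(3) h(1,2) unfolding saturates_def by blast+
    thus "w \<in> L1 \<inter> L2 \<longleftrightarrow> w' \<in> L1 \<inter> L2" by simp
  qed
  ultimately show ?thesis by (rule recogI)
qed

lemma recog_union: "recog L1 \<Longrightarrow> recog L2 \<Longrightarrow> recog (L1 \<union> L2)"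
proof -
  assume "recog L1" "recog L2"
  hence "recog (- (- L1 \<inter> - L2))" by (intro recog_compl recog_inter)
  thus ?thesis by simp
qed

lemma seg_Suc: "i \<le> j \<Longrightarrow> seg w i (Suc j) = seg w i j @ [w j]"
  by (simp add: seg_def)

lemma seg_app: "i \<le> j \<Longrightarrow> j \<le> l \<Longrightarrow> seg w i l = seg w i j @ seg w j l"
  unfolding seg_def by (metis le_add_diff_inverse map_append upt_add_eq_append)

lemma seg_empty[simp]: "seg w i i = []"
  by (simp add: seg_def)

lemma length_seg[simp]: "length (seg w i j) = j - i"
  by (simp add: seg_def)

lemma nth_seg[simp]: "t < j - i \<Longrightarrow> seg w i j ! t = w (i + t)"
  by (simp add: seg_def)

lemma fct_ge: "fct c \<Longrightarrow> j \<le> c j"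
  unfolding fct_def by (simp add: strict_mono_imp_increasing)

lemma fct_mono: "fct c \<Longrightarrow> i \<le> j \<Longrightarrow> c i \<le> c j"
  unfolding fct_def by (simp add: strict_mono_less_eq)

definition dlang :: "('s \<Rightarrow> 'a \<Rightarrow> 's) \<Rightarrow> 's \<Rightarrow> ('s \<Rightarrow> bool) \<Rightarrow> (nat \<Rightarrow> 'a) set" where
  "dlang \<delta> q0 F = {w. \<exists>n. F (foldl \<delta> q0 (seg w 0 n))}"

lemma foldl_absorb: "(\<And>q a. F q \<Longrightarrow> F (\<delta> q a)) \<Longrightarrow> F q \<Longrightarrow> F (foldl \<delta> q xs)"
  by (induction xs arbitrary: q) auto

lemma recog_dfa:
  fixes \<delta> :: "'s::finite \<Rightarrow> 'a \<Rightarrow> 's"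
  assumes ab: "\<And>q a. F q \<Longrightarrow> F (\<delta> q a)"
  shows "recog (dlang \<delta> q0 F)"
proof (rule recogI[where k="\<lambda>u q. foldl \<delta> q u"])
  show "finite (range (\<lambda>u q. foldl \<delta> q u))" by simp
  show "congr (\<lambda>u q. foldl \<delta> q u)" unfolding congr_def
  proof (intro allI impI conjI)
    fix u v y :: "'a list"
    assume h: "(\<lambda>q. foldl \<delta> q u) = (\<lambda>q. foldl \<delta> q v)"
    show "(\<lambda>q. foldl \<delta> q (u @ y)) = (\<lambda>q. foldl \<delta> q (v @ y))"
      using h by (simp add: fun_eq_iff)
    show "(\<lambda>q. foldl \<delta> q (y @ u)) = (\<lambda>q. foldl \<delta> q (y @ v))"
      using h by (simp add: fun_eq_iff)
  qed
  define K where "K = (\<lambda>(w::nat\<Rightarrow>'a) (c::nat\<Rightarrow>nat) (j::nat). foldl \<delta> q0 (seg w 0 (c j)))"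
  have KS: "K w c (Suc j) = foldl \<delta> (K w c j) (seg w (c j) (c (Suc j)))" if "fct c" for w c j
    unfolding K_def using seg_app[of 0 "c j" "c (Suc j)" w] fct_mono[OF that, of j "Suc j"] by simp
  have K0: "K w c 0 = q0" if "fct c" for w c using that unfolding K_def fct_def by simp
  have mem: "w \<in> dlang \<delta> q0 F \<longleftrightarrow> (\<exists>j. F (K w c j))" if c: "fct c" for w c
  proof
    assume "w \<in> dlang \<delta> q0 F"
    then obtain n where n: "F (foldl \<delta> q0 (seg w 0 n))" unfolding dlang_def by auto
    have "seg w 0 (c n) = seg w 0 n @ seg w n (c n)" using seg_app[of 0 n "c n" w] fct_ge[OF c, of n] by simp
    hence "F (K w c n)" unfolding K_def using foldl_absorb[of F \<delta>, OF ab n] by simp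
    thus "\<exists>j. F (K w c j)" by blast
  next
    assume "\<exists>j. F (K w c j)" thus "w \<in> dlang \<delta> q0 F" unfolding dlang_def K_def by blast
  qed
  show "saturates (\<lambda>u q. foldl \<delta> q u) (dlang \<delta> q0 F)"
    unfolding saturates_def
  proof (intro allI impI)
    fix w w' c c'
    assume c: "fct c" and c': "fct c'"
      and eq: "\<forall>j. (\<lambda>q. foldl \<delta> q (seg w (c j) (c (Suc j)))) = (\<lambda>q. foldl \<delta> q (seg w' (c' j) (c' (Suc j))))"
    have "K w c j = K w' c' j" for j
    proof (induction j)
      case 0 thus ?case using K0 c c' by simp
    next
      case (Suc j)
      have "foldl \<delta> (K w c j) (seg w (c j) (c (Suc j))) = foldl \<delta> (K w' c' j) (seg w' (c' j) (c' (Suc j)))"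
        using fun_cong[OF spec[OF eq, of j], of "K w c j"] Suc by simp
      thus ?case using KS[OF c] KS[OF c'] by simp
    qed
    thus "w \<in> dlang \<delta> q0 F \<longleftrightarrow> w' \<in> dlang \<delta> q0 F" using mem[OF c] mem[OF c'] by simp
  qed
qed

lemma foldl_seg: "foldl \<delta> q (seg w 0 (Suc n)) = \<delta> (foldl \<delta> q (seg w 0 n)) (w n)"
  by (simp add: seg_def)

lemma recog_E1: "recog {w. \<exists>i. Q (w i)}"
proof -
  let ?d = "\<lambda>q a. q \<or> Q a"
  have st: "foldl ?d False (seg w 0 n) = (\<exists>i<n. Q (w i))" for w n
    by (induction n) (auto simp: foldl_seg less_Suc_eq)
  have "dlang ?d False (\<lambda>q. q) = {w. \<exists>i. Q (w i)}"
    unfolding dlang_def st by auto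
  moreover have "recog (dlang ?d False (\<lambda>q. q))" by (rule recog_dfa) auto
  ultimately show ?thesis by simp
qed

lemma recog_E0: "recog {w. Q (w 0)}"
proof -
  let ?d = "\<lambda>(s::bool,acc::bool) a. (True, acc \<or> (\<not>s \<and> Q a))"
  have st: "foldl ?d (False,False) (seg w 0 n) = (0<n, 0<n \<and> Q (w 0))" for w n
  proof (induction n)
    case (Suc n) thus ?case by (cases n) (auto simp: foldl_seg)
  qed simp
  have "dlang ?d (False,False) snd = {w. Q (w 0)}"
    unfolding dlang_def st by auto
  moreover have "recog (dlang ?d (False,False) snd)" by (rule recog_dfa) auto
  ultimately show ?thesis by simp
qed

lemma recog_ELess: "recog {w. \<exists>i j. i < j \<and> Q1 (w i) \<and> Q2 (w j)}"
proof -
  let ?d = "\<lambda>(s::bool,acc::bool) a. (s \<or> Q1 a, acc \<or> (s \<and> Q2 a))"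
  have st: "foldl ?d (False,False) (seg w 0 n) = ((\<exists>i<n. Q1 (w i)), (\<exists>i j. i<j \<and> j<n \<and> Q1 (w i) \<and> Q2 (w j)))" for w n
    by (induction n) (auto simp: foldl_seg less_Suc_eq)
  have "dlang ?d (False,False) snd = {w. \<exists>i j. i < j \<and> Q1 (w i) \<and> Q2 (w j)}"
    unfolding dlang_def st by auto
  moreover have "recog (dlang ?d (False,False) snd)" by (rule recog_dfa) auto
  ultimately show ?thesis by simp
qed

lemma recog_ESucc: "recog {w. \<exists>i. Q1 (w i) \<and> Q2 (w (Suc i))}"
proof -
  let ?d = "\<lambda>(l::bool,acc::bool) a. (Q1 a, acc \<or> (l \<and> Q2 a))"
  have st: "foldl ?d (False,False) (seg w 0 n) = ((\<exists>m. n = Suc m \<and> Q1 (w m)), (\<exists>i. Suc i<n \<and> Q1 (w i) \<and> Q2 (w (Suc i))))" for w n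
    by (induction n) (auto simp: foldl_seg less_Suc_eq)
  have "dlang ?d (False,False) snd = {w. \<exists>i. Q1 (w i) \<and> Q2 (w (Suc i))}"
    unfolding dlang_def st by auto
  moreover have "recog (dlang ?d (False,False) snd)" by (rule recog_dfa) auto
  ultimately show ?thesis by simp
qed



definition blk :: "(nat \<Rightarrow> nat) \<Rightarrow> nat \<Rightarrow> nat" where
  "blk c i = (LEAST j. i < c (Suc j))"

lemma blk_bounds:
  assumes c: "fct c"
  shows "c (blk c i) \<le> i \<and> i < c (Suc (blk c i))"
proof -
  have ex: "\<exists>j. i < c (Suc j)" using fct_ge[OF c, of "Suc i"] by (intro exI[of _ i]) simp
  have 1: "i < c (Suc (blk c i))" unfolding blk_def using LeastI_ex[OF ex] .
  have 2: "c (blk c i) \<le> i"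
  proof (cases "blk c i")
    case 0 thus ?thesis using c by (simp add: fct_def)
  next
    case (Suc m)
    have "\<not> i < c (Suc m)"
    proof
      assume "i < c (Suc m)"
      hence "blk c i \<le> m" unfolding blk_def by (rule Least_le)
      thus False using Suc by simp
    qed
    thus ?thesis using Suc by simp
  qed
  show ?thesis using 1 2 by simp
qed

lemma blk_unique:
  assumes c: "fct c" and h: "c j \<le> i" "i < c (Suc j)"
  shows "blk c i = j"
proof -
  have b: "c (blk c i) \<le> i" "i < c (Suc (blk c i))" using blk_bounds[OF c] by auto
  have sm: "strict_mono c" using c by (simp add: fct_def)
  show ?thesis
  proof (rule ccontr)
    assume "blk c i \<noteq> j"
    hence "blk c i < j \<or> j < blk c i" by arith
    thus False
    proof
      assume "blk c i < j" hence "Suc (blk c i) \<le> j" by simp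
      hence "c (Suc (blk c i)) \<le> c j" using fct_mono[OF c] by blast
      thus False using b h by simp
    next
      assume "j < blk c i" hence "Suc j \<le> blk c i" by simp
      hence "c (Suc j) \<le> c (blk c i)" using fct_mono[OF c] by blast
      thus False using b h by simp
    qed
  qed
qed

definition proj :: "('a \<Rightarrow> 'a \<Rightarrow> bool) \<Rightarrow> (nat \<Rightarrow> 'a) set \<Rightarrow> (nat \<Rightarrow> 'a) set" where
  "proj R L = {w. \<exists>w'. (\<forall>i. R (w i) (w' i)) \<and> w' \<in> L}"

lemma list_all2_seg: "(\<forall>i. R (w i) (w' i)) \<Longrightarrow> list_all2 R (seg w i j) (seg w' i j)"
  by (simp add: list_all2_conv_all_nth)

lemma proj_sat_dir:
  fixes k :: "'a list \<Rightarrow> 'a list set"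
  assumes sat: "saturates k L"
    and c: "fct c" and d: "fct d"
    and eq: "\<forall>j. k ` {u'. list_all2 R (seg w (c j) (c (Suc j))) u'} = k ` {u'. list_all2 R (seg v (d j) (d (Suc j))) u'}"
    and w: "w \<in> proj R L"
  shows "v \<in> proj R L"
proof -
  obtain w' where w': "\<forall>i. R (w i) (w' i)" "w' \<in> L" using w unfolding proj_def by blast
  have "\<exists>b. list_all2 R (seg v (d j) (d (Suc j))) b \<and> k b = k (seg w' (c j) (c (Suc j)))" for j
  proof -
    have "k (seg w' (c j) (c (Suc j))) \<in> k ` {u'. list_all2 R (seg w (c j) (c (Suc j))) u'}"
      using list_all2_seg[of R w w', OF w'(1)] by blast
    thus ?thesis using eq by auto
  qed
  then obtain b where b: "\<And>j. list_all2 R (seg v (d j) (d (Suc j))) (b j)"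
      "\<And>j. k (b j) = k (seg w' (c j) (c (Suc j)))" by metis
  define v' where "v' i = b (blk d i) ! (i - d (blk d i))" for i
  have lenb: "length (b j) = d (Suc j) - d j" for j using list_all2_lengthD[OF b(1)[of j]] by simp
  have segv': "seg v' (d j) (d (Suc j)) = b j" for j
  proof (rule nth_equalityI)
    show "length (seg v' (d j) (d (Suc j))) = length (b j)" using lenb by simp
    fix t assume "t < length (seg v' (d j) (d (Suc j)))"
    hence t: "t < d (Suc j) - d j" by simp
    have "blk d (d j + t) = j" using blk_unique[OF d, of j "d j + t"] t by simp
    thus "seg v' (d j) (d (Suc j)) ! t = b j ! t" using t unfolding v'_def by simp
  qed
  have R: "R (v i) (v' i)" for i
  proof -
    let ?j = "blk d i"
    have bd: "d ?j \<le> i" "i < d (Suc ?j)" using blk_bounds[OF d] by auto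
    have t: "i - d ?j < d (Suc ?j) - d ?j" using bd by simp
    have "R (seg v (d ?j) (d (Suc ?j)) ! (i - d ?j)) (b ?j ! (i - d ?j))"
      using b(1)[of ?j] t by (simp add: list_all2_conv_all_nth)
    thus ?thesis using t bd unfolding v'_def by simp
  qed
  have "v' \<in> L"
    using sat c d w'(2) segv' b(2) unfolding saturates_def by metis
  thus ?thesis using R unfolding proj_def by blast
qed

lemma recog_proj:
  assumes "recog L" shows "recog (proj R L)"
proof -
  obtain k :: "'a list \<Rightarrow> 'a list set" where k: "finite (range k)" "congr k" "saturates k L"
    using assms unfolding recog_def by blast
  define k' where "k' u = k ` {u'. list_all2 R u u'}" for u
  have "range k' \<subseteq> Pow (range k)" unfolding k'_def by auto
  hence fin: "finite (range k')" using k(1) by (meson finite_Pow_iff finite_subset)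
  define F where "F S T = {k (a @ b) | a b. k a \<in> S \<and> k b \<in> T}" for S T
  have kapp: "k' (u @ v) = F (k' u) (k' v)" for u v
  proof
    show "k' (u @ v) \<subseteq> F (k' u) (k' v)"
    proof
      fix x assume "x \<in> k' (u @ v)"
      then obtain z where z: "list_all2 R (u @ v) z" "x = k z" unfolding k'_def by blast
      then obtain z1 z2 where "z = z1 @ z2" "list_all2 R u z1" "list_all2 R v z2"
        by (auto simp: list_all2_append1)
      thus "x \<in> F (k' u) (k' v)" using z unfolding F_def k'_def by blast
    qed
  next
    show "F (k' u) (k' v) \<subseteq> k' (u @ v)"
    proof
      fix x assume "x \<in> F (k' u) (k' v)"
      then obtain a b z1 z2 where h: "x = k (a @ b)" "k a = k z1" "k b = k z2"
        "list_all2 R u z1" "list_all2 R v z2" unfolding F_def k'_def by auto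
      have "k (a @ b) = k (z1 @ b)" using k(2) h(2) unfolding congr_def by blast
      also have "\<dots> = k (z1 @ z2)" using k(2) h(3) unfolding congr_def by blast
      finally have "x = k (z1 @ z2)" using h(1) by simp
      moreover have "list_all2 R (u @ v) (z1 @ z2)" using h(4,5) by (rule list_all2_appendI)
      ultimately show "x \<in> k' (u @ v)" unfolding k'_def by blast
    qed
  qed
  have cg: "congr k'" unfolding congr_def using kapp by metis
  have st: "saturates k' (proj R L)" unfolding saturates_def
  proof (intro allI impI)
    fix w w' c c' assume h: "fct c" "fct c'" "\<forall>j. k' (seg w (c j) (c (Suc j))) = k' (seg w' (c' j) (c' (Suc j)))"
    show "w \<in> proj R L \<longleftrightarrow> w' \<in> proj R L"
    proof
      assume "w \<in> proj R L" thus "w' \<in> proj R L"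
        using proj_sat_dir[OF k(3) h(1,2)] h(3) unfolding k'_def by blast
    next
      assume "w' \<in> proj R L" thus "w \<in> proj R L"
        using proj_sat_dir[OF k(3) h(2,1)] h(3) unfolding k'_def by metis
    qed
  qed
  show ?thesis using fin cg st by (rule recogI)
qed



lemma mso_sat_cong:
  "(\<forall>\<phi>\<in>preds \<psi>. \<forall>i. s1 \<phi> (a1 i) = s2 \<phi> (a2 i)) \<Longrightarrow> (\<forall>x\<in>fv1 \<psi>. I1 x = J1 x) \<Longrightarrow>
   (\<forall>X\<in>fv2 \<psi>. I2 X = J2 X) \<Longrightarrow> mso_sat s1 a1 I1 I2 \<psi> = mso_sat s2 a2 J1 J2 \<psi>"
proof (induction \<psi> arbitrary: I1 I2 J1 J2)
  case (Ex1 x a)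
  have "mso_sat s1 a1 (I1(x:=i)) I2 a = mso_sat s2 a2 (J1(x:=i)) J2 a" for i
    by (rule Ex1.IH) (use Ex1.prems in auto)
  thus ?case by simp
next
  case (All1 x a)
  have "mso_sat s1 a1 (I1(x:=i)) I2 a = mso_sat s2 a2 (J1(x:=i)) J2 a" for i
    by (rule All1.IH) (use All1.prems in auto)
  thus ?case by simp
next
  case (Ex2 X a)
  have "mso_sat s1 a1 I1 (I2(X:=S)) a = mso_sat s2 a2 J1 (J2(X:=S)) a" for S
    by (rule Ex2.IH) (use Ex2.prems in auto)
  thus ?case by simp
next
  case (All2 X a)
  have "mso_sat s1 a1 I1 (I2(X:=S)) a = mso_sat s2 a2 J1 (J2(X:=S)) a" for S
    by (rule All2.IH) (use All2.prems in auto)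
  thus ?case by simp
next
  case (Neg a)
  have "mso_sat s1 a1 I1 I2 a = mso_sat s2 a2 J1 J2 a" by (rule Neg.IH) (use Neg.prems in auto)
  thus ?case by simp
next
  case (Conj a b)
  have "mso_sat s1 a1 I1 I2 a = mso_sat s2 a2 J1 J2 a" by (rule Conj.IH(1)) (use Conj.prems in auto)
  moreover have "mso_sat s1 a1 I1 I2 b = mso_sat s2 a2 J1 J2 b" by (rule Conj.IH(2)) (use Conj.prems in auto)
  ultimately show ?case by simp
next
  case (Disj a b)
  have "mso_sat s1 a1 I1 I2 a = mso_sat s2 a2 J1 J2 a" by (rule Disj.IH(1)) (use Disj.prems in auto)
  moreover have "mso_sat s1 a1 I1 I2 b = mso_sat s2 a2 J1 J2 b" by (rule Disj.IH(2)) (use Disj.prems in auto)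
  ultimately show ?case by simp
qed simp_all

type_synonym 'f atom = "'f + nat + nat"

definition AA :: "'f set \<Rightarrow> nat set \<Rightarrow> nat set \<Rightarrow> 'f atom set" where
  "AA P V1 V2 = Inl ` P \<union> Inr ` Inl ` V1 \<union> Inr ` Inr ` V2"

definition wf :: "'f set \<Rightarrow> nat set \<Rightarrow> nat set \<Rightarrow> (nat \<Rightarrow> 'f atom set) \<Rightarrow> bool" where
  "wf P V1 V2 w \<longleftrightarrow> (\<forall>i. w i \<subseteq> AA P V1 V2) \<and> (\<forall>x\<in>V1. \<exists>!i. Inr (Inl x) \<in> w i)"

definition dec1 :: "(nat \<Rightarrow> 'f atom set) \<Rightarrow> nat \<Rightarrow> nat" where
  "dec1 w x = (THE i. Inr (Inl x) \<in> w i)"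

definition dec2 :: "(nat \<Rightarrow> 'f atom set) \<Rightarrow> nat \<Rightarrow> nat set" where
  "dec2 w X = {i. Inr (Inr X) \<in> w i}"

definition asat :: "'f \<Rightarrow> 'f atom set list \<Rightarrow> bool" where
  "asat \<phi> S \<longleftrightarrow> Inl \<phi> \<in> hd S"

definition LL :: "'f set \<Rightarrow> nat set \<Rightarrow> nat set \<Rightarrow> 'f mso \<Rightarrow> (nat \<Rightarrow> 'f atom set) set" where
  "LL P V1 V2 \<psi> = {w. wf P V1 V2 w \<and> mso_sat asat (\<lambda>i. [w i]) (dec1 w) (dec2 w) \<psi>}"

definition WF :: "'f set \<Rightarrow> nat set \<Rightarrow> nat set \<Rightarrow> (nat \<Rightarrow> 'f atom set) set" where
  "WF P V1 V2 = {w. wf P V1 V2 w}"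

lemma dec1_iff:
  assumes "wf P V1 V2 w" "x \<in> V1"
  shows "Inr (Inl x) \<in> w i \<longleftrightarrow> dec1 w x = i"
proof -
  have u: "\<exists>!i. Inr (Inl x) \<in> w i" using assms unfolding wf_def by blast
  show ?thesis unfolding dec1_def
  proof
    assume "Inr (Inl x) \<in> w i" thus "(THE i. Inr (Inl x) \<in> w i) = i" by (rule the1_equality[OF u])
  next
    assume "(THE i. Inr (Inl x) \<in> w i) = i" thus "Inr (Inl x) \<in> w i" using theI'[OF u] by simp
  qed
qed

lemma recog_UNIV: "recog UNIV"
proof -
  have "recog (- {w. \<exists>i. (\<lambda>_. False) (w i)})" by (rule recog_compl[OF recog_E1])
  moreover have "- {w. \<exists>i. (\<lambda>_. False) ((w::nat \<Rightarrow> 'a) i)} = UNIV" by simp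
  ultimately show ?thesis by simp
qed

lemma recog_Ball:
  assumes "finite V" "\<And>x. x \<in> V \<Longrightarrow> recog (S x)"
  shows "recog {w. \<forall>x\<in>V. w \<in> S x}"
  using assms
proof (induction V rule: finite_induct)
  case empty thus ?case using recog_UNIV by simp
next
  case (insert x F)
  have e: "{w. \<forall>y\<in>insert x F. w \<in> S y} = S x \<inter> {w. \<forall>y\<in>F. w \<in> S y}" by auto
  have "recog (S x)" using insert.prems by simp
  moreover have "recog {w. \<forall>y\<in>F. w \<in> S y}" using insert.IH insert.prems by simp
  ultimately show ?case unfolding e by (rule recog_inter)
qed

lemma ex1_eq: fixes z :: 'a shows "{w. \<exists>!i::nat. z \<in> w i} = {w. \<exists>i. z \<in> w i} \<inter> - {w. \<exists>i j. i < j \<and> z \<in> w i \<and> z \<in> w j}"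
proof -
  have "(\<exists>!i. z \<in> w i) \<longleftrightarrow> (\<exists>i. z \<in> w i) \<and> \<not> (\<exists>i j. i < j \<and> z \<in> w i \<and> z \<in> w j)" for w :: "nat \<Rightarrow> 'a set"
  proof
    assume "\<exists>!i. z \<in> w i"
    then obtain i where a1: "z \<in> w i" and a2: "\<And>j. z \<in> w j \<Longrightarrow> j = i" unfolding Ex1_def by blast
    have "\<not> (\<exists>i j. i < j \<and> z \<in> w i \<and> z \<in> w j)"
    proof
      assume "\<exists>i j. i < j \<and> z \<in> w i \<and> z \<in> w j"
      then obtain i1 j1 where "i1 < j1" "z \<in> w i1" "z \<in> w j1" by blast
      thus False using a2[of i1] a2[of j1] by simp
    qed
    thus "(\<exists>i. z \<in> w i) \<and> \<not> (\<exists>i j. i < j \<and> z \<in> w i \<and> z \<in> w j)" using a1 by blast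
  next
    assume h: "(\<exists>i. z \<in> w i) \<and> \<not> (\<exists>i j. i < j \<and> z \<in> w i \<and> z \<in> w j)"
    obtain i where i: "z \<in> w i" using h by blast
    have "\<And>j. z \<in> w j \<Longrightarrow> j = i"
    proof -
      fix j assume j: "z \<in> w j"
      show "j = i"
      proof (rule ccontr)
        assume "j \<noteq> i"
        hence "j < i \<or> i < j" by arith
        thus False using h i j by blast
      qed
    qed
    thus "\<exists>!i. z \<in> w i" using i by blast
  qed
  note eqw = this
  show ?thesis
  proof (rule set_eqI)
    fix w :: "nat \<Rightarrow> 'a set"
    show "w \<in> {w. \<exists>!i. z \<in> w i} \<longleftrightarrow> w \<in> {w. \<exists>i. z \<in> w i} \<inter> - {w. \<exists>i j. i < j \<and> z \<in> w i \<and> z \<in> w j}"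
      using eqw[of w] by simp
  qed
qed

lemma recog_sing: "recog {w. \<exists>!i. z \<in> w i}"
  unfolding ex1_eq by (intro recog_inter recog_compl recog_E1 recog_ELess)

lemma recog_WF:
  fixes P :: "'f set"
  assumes "finite V1"
  shows "recog (WF P V1 V2)"
proof -
  have sing: "recog {w. \<exists>!i. (Inr (Inl x) :: 'f atom) \<in> w i}" for x :: nat
    by (rule recog_sing)
  have e: "WF P V1 V2 = - {w. \<exists>i. \<not> w i \<subseteq> AA P V1 V2} \<inter> {w. \<forall>x\<in>V1. w \<in> {w. \<exists>!i. Inr (Inl x) \<in> w i}}"
    unfolding WF_def wf_def by auto
  have "recog (- {w. \<exists>i. \<not> w i \<subseteq> AA P V1 V2} \<inter> {w. \<forall>x\<in>V1. w \<in> {w. \<exists>!i. (Inr (Inl x) :: 'f atom) \<in> w i}})"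
    by (intro recog_inter recog_compl recog_E1 recog_Ball assms sing)
  thus ?thesis unfolding e .
qed



lemma agree_mem: "\<forall>j. w j - {z} = w' j - {z} \<Longrightarrow> t \<noteq> z \<Longrightarrow> t \<in> w j \<longleftrightarrow> t \<in> w' j"
  by blast

lemma agree_dec1: "\<forall>j. w j - {z} = w' j - {z} \<Longrightarrow> z \<noteq> Inr (Inl y) \<Longrightarrow> dec1 w y = dec1 w' y"
proof -
  assume a: "\<forall>j. w j - {z} = w' j - {z}" "z \<noteq> Inr (Inl y)"
  have "\<And>i. Inr (Inl y) \<in> w i \<longleftrightarrow> Inr (Inl y) \<in> w' i" using agree_mem[OF a(1)] a(2) by metis
  thus ?thesis unfolding dec1_def by simp
qed

lemma agree_dec2: "\<forall>j. w j - {z} = w' j - {z} \<Longrightarrow> z \<noteq> Inr (Inr X) \<Longrightarrow> dec2 w X = dec2 w' X"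
proof -
  assume a: "\<forall>j. w j - {z} = w' j - {z}" "z \<noteq> Inr (Inr X)"
  have "\<And>i. Inr (Inr X) \<in> w i \<longleftrightarrow> Inr (Inr X) \<in> w' i" using agree_mem[OF a(1)] a(2) by metis
  thus ?thesis unfolding dec2_def by simp
qed

lemma agree_sat:
  assumes "\<forall>j. w j - {Inr z} = w' j - {Inr z}"
  shows "mso_sat asat (\<lambda>i. [w i]) I1 I2 b = mso_sat asat (\<lambda>i. [w' i]) I1 I2 b"
proof (rule mso_sat_cong)
  show "\<forall>\<phi>\<in>preds b. \<forall>i. asat \<phi> [w i] = asat \<phi> [w' i]"
    unfolding asat_def using agree_mem[OF assms] by simp
qed auto

lemma LL_Neg: "LL P V1 V2 (Neg a) = WF P V1 V2 \<inter> - LL P V1 V2 a"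
  unfolding LL_def WF_def by auto

lemma LL_Conj: "LL P V1 V2 (Conj a b) = LL P V1 V2 a \<inter> LL P V1 V2 b"
  unfolding LL_def by auto

lemma LL_Disj: "LL P V1 V2 (Disj a b) = LL P V1 V2 a \<union> LL P V1 V2 b"
  unfolding LL_def by auto

lemma LL_All1: "LL P V1 V2 (All1 x a) = WF P V1 V2 \<inter> - LL P V1 V2 (Ex1 x (Neg a))"
  unfolding LL_def WF_def by auto

lemma LL_All2: "LL P V1 V2 (All2 X a) = WF P V1 V2 \<inter> - LL P V1 V2 (Ex2 X (Neg a))"
  unfolding LL_def WF_def by auto

lemma LL_atomic:
  assumes "x \<in> V1"
  shows "LL P V1 V2 (Zero x) = WF P V1 V2 \<inter> {w. Inr (Inl x) \<in> w 0}"
    and "y \<in> V1 \<Longrightarrow> LL P V1 V2 (Eq x y) = WF P V1 V2 \<inter> {w. \<exists>i. Inr (Inl x) \<in> w i \<and> Inr (Inl y) \<in> w i}"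
    and "y \<in> V1 \<Longrightarrow> LL P V1 V2 (Less x y) = WF P V1 V2 \<inter> {w. \<exists>i j. i < j \<and> Inr (Inl x) \<in> w i \<and> Inr (Inl y) \<in> w j}"
    and "y \<in> V1 \<Longrightarrow> LL P V1 V2 (Succ x y) = WF P V1 V2 \<inter> {w. \<exists>i. Inr (Inl x) \<in> w i \<and> Inr (Inl y) \<in> w (Suc i)}"
    and "LL P V1 V2 (Pred \<phi> x) = WF P V1 V2 \<inter> {w. \<exists>i. Inr (Inl x) \<in> w i \<and> Inl \<phi> \<in> w i}"
    and "LL P V1 V2 (Mem x X) = WF P V1 V2 \<inter> {w. \<exists>i. Inr (Inl x) \<in> w i \<and> Inr (Inr X) \<in> w i}"
proof -
  have dx: "wf P V1 V2 w \<Longrightarrow> Inr (Inl x) \<in> w i \<longleftrightarrow> dec1 w x = i" for w i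
    using dec1_iff assms by metis
  show "LL P V1 V2 (Zero x) = WF P V1 V2 \<inter> {w. Inr (Inl x) \<in> w 0}"
    by (rule set_eqI) (auto simp: LL_def WF_def dx)
  show "LL P V1 V2 (Pred \<phi> x) = WF P V1 V2 \<inter> {w. \<exists>i. Inr (Inl x) \<in> w i \<and> Inl \<phi> \<in> w i}"
    by (rule set_eqI) (auto simp: LL_def WF_def dx asat_def)
  show "LL P V1 V2 (Mem x X) = WF P V1 V2 \<inter> {w. \<exists>i. Inr (Inl x) \<in> w i \<and> Inr (Inr X) \<in> w i}"
    by (rule set_eqI) (auto simp: LL_def WF_def dx dec2_def)
  assume "y \<in> V1"
  hence dy: "wf P V1 V2 w \<Longrightarrow> Inr (Inl y) \<in> w i \<longleftrightarrow> dec1 w y = i" for w i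
    using dec1_iff by metis
  show "LL P V1 V2 (Eq x y) = WF P V1 V2 \<inter> {w. \<exists>i. Inr (Inl x) \<in> w i \<and> Inr (Inl y) \<in> w i}"
    by (rule set_eqI) (auto simp: LL_def WF_def dx dy)
  show "LL P V1 V2 (Less x y) = WF P V1 V2 \<inter> {w. \<exists>i j. i < j \<and> Inr (Inl x) \<in> w i \<and> Inr (Inl y) \<in> w j}"
    by (rule set_eqI) (auto simp: LL_def WF_def dx dy)
  show "LL P V1 V2 (Succ x y) = WF P V1 V2 \<inter> {w. \<exists>i. Inr (Inl x) \<in> w i \<and> Inr (Inl y) \<in> w (Suc i)}"
    by (rule set_eqI) (auto simp: LL_def WF_def dx dy)
qed



lemma LL_Ex1:
  "LL P V1 V2 (Ex1 x b) = WF P V1 V2 \<inter> proj (\<lambda>S T. S - {Inr (Inl x)} = T - {Inr (Inl x)}) (LL P (insert x V1) V2 b)"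
  (is "?L = ?R")
proof (rule set_eqI, rule iffI)
  let ?x = "Inr (Inl x) :: 'a atom"
  fix w assume "w \<in> ?L"
  then obtain i where wf: "wf P V1 V2 w" and s: "mso_sat asat (\<lambda>i. [w i]) ((dec1 w)(x := i)) (dec2 w) b"
    unfolding LL_def by auto
  define w' where "w' j = (w j - {?x}) \<union> (if j = i then {?x} else {})" for j
  have ag: "\<forall>j. w j - {?x} = w' j - {?x}" unfolding w'_def by auto
  have wf': "wf P (insert x V1) V2 w'"
    unfolding wf_def
  proof (intro conjI ballI allI)
    fix j show "w' j \<subseteq> AA P (insert x V1) V2"
      using wf unfolding wf_def w'_def AA_def by auto
  next
    fix y assume y: "y \<in> insert x V1"
    show "\<exists>!j. Inr (Inl y) \<in> w' j"
    proof (cases "y = x")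
      case True thus ?thesis unfolding w'_def by auto
    next
      case False
      hence "y \<in> V1" using y by simp
      hence "\<exists>!j. Inr (Inl y) \<in> w j" using wf unfolding wf_def by blast
      moreover have "\<And>j. Inr (Inl y) \<in> w j \<longleftrightarrow> Inr (Inl y) \<in> w' j"
        using agree_mem[OF ag] False by simp
      ultimately show ?thesis by simp
    qed
  qed
  have d1: "dec1 w' = (dec1 w)(x := i)"
  proof
    fix y show "dec1 w' y = ((dec1 w)(x := i)) y"
    proof (cases "y = x")
      case True
      have "(THE j. ?x \<in> w' j) = i" by (rule the_equality) (auto simp: w'_def split: if_splits)
      thus ?thesis using True unfolding dec1_def by simp
    next
      case False thus ?thesis using agree_dec1[OF ag, of y] by simp
    qed
  qed
  have d2: "dec2 w' = dec2 w"
  proof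
    fix X show "dec2 w' X = dec2 w X" using agree_dec2[OF ag, of X] by simp
  qed
  have "mso_sat asat (\<lambda>i. [w' i]) (dec1 w') (dec2 w') b"
    using s agree_sat[OF ag] d1 d2 by simp
  hence "w' \<in> LL P (insert x V1) V2 b" using wf' unfolding LL_def by simp
  moreover have "\<forall>j. w j - {?x} = w' j - {?x}" by (rule ag)
  ultimately show "w \<in> ?R" using wf unfolding WF_def proj_def by blast
next
  let ?x = "Inr (Inl x) :: 'a atom"
  fix w assume "w \<in> ?R"
  then obtain w' where wf: "wf P V1 V2 w" and ag: "\<forall>j. w j - {?x} = w' j - {?x}"
    and w': "wf P (insert x V1) V2 w'" "mso_sat asat (\<lambda>i. [w' i]) (dec1 w') (dec2 w') b"
    unfolding WF_def proj_def LL_def by blast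
  define i where "i = dec1 w' x"
  have d1: "dec1 w' = (dec1 w)(x := i)"
  proof
    fix y show "dec1 w' y = ((dec1 w)(x := i)) y"
      using agree_dec1[OF ag, of y] unfolding i_def by (cases "y = x") auto
  qed
  have d2: "dec2 w' = dec2 w"
  proof
    fix X show "dec2 w' X = dec2 w X" using agree_dec2[OF ag, of X] by simp
  qed
  have "mso_sat asat (\<lambda>i. [w i]) ((dec1 w)(x := i)) (dec2 w) b"
    using w'(2) agree_sat[OF ag] d1 d2 by simp
  thus "w \<in> ?L" using wf unfolding LL_def by auto
qed

lemma LL_Ex2:
  "LL P V1 V2 (Ex2 X b) = WF P V1 V2 \<inter> proj (\<lambda>S T. S - {Inr (Inr X)} = T - {Inr (Inr X)}) (LL P V1 (insert X V2) b)"
  (is "?L = ?R")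
proof (rule set_eqI, rule iffI)
  let ?x = "Inr (Inr X) :: 'a atom"
  fix w assume "w \<in> ?L"
  then obtain S where wf: "wf P V1 V2 w" and s: "mso_sat asat (\<lambda>i. [w i]) (dec1 w) ((dec2 w)(X := S)) b"
    unfolding LL_def by auto
  define w' where "w' j = (w j - {?x}) \<union> (if j \<in> S then {?x} else {})" for j
  have ag: "\<forall>j. w j - {?x} = w' j - {?x}" unfolding w'_def by auto
  have wf': "wf P V1 (insert X V2) w'"
    unfolding wf_def
  proof (intro conjI ballI allI)
    fix j show "w' j \<subseteq> AA P V1 (insert X V2)"
      using wf unfolding wf_def w'_def AA_def by auto
  next
    fix y assume y: "y \<in> V1"
    hence "\<exists>!j. Inr (Inl y) \<in> w j" using wf unfolding wf_def by blast
    moreover have "\<And>j. Inr (Inl y) \<in> w j \<longleftrightarrow> Inr (Inl y) \<in> w' j"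
      using agree_mem[OF ag] by simp
    ultimately show "\<exists>!j. Inr (Inl y) \<in> w' j" by simp
  qed
  have d2: "dec2 w' = (dec2 w)(X := S)"
  proof
    fix Y show "dec2 w' Y = ((dec2 w)(X := S)) Y"
    proof (cases "Y = X")
      case True thus ?thesis unfolding dec2_def w'_def by auto
    next
      case False thus ?thesis using agree_dec2[OF ag, of Y] by simp
    qed
  qed
  have d1: "dec1 w' = dec1 w"
  proof
    fix y show "dec1 w' y = dec1 w y" using agree_dec1[OF ag, of y] by simp
  qed
  have "mso_sat asat (\<lambda>i. [w' i]) (dec1 w') (dec2 w') b"
    using s agree_sat[OF ag] d1 d2 by simp
  hence "w' \<in> LL P V1 (insert X V2) b" using wf' unfolding LL_def by simp
  thus "w \<in> ?R" using wf ag unfolding WF_def proj_def by blast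
next
  let ?x = "Inr (Inr X) :: 'a atom"
  fix w assume "w \<in> ?R"
  then obtain w' where wf: "wf P V1 V2 w" and ag: "\<forall>j. w j - {?x} = w' j - {?x}"
    and w': "wf P V1 (insert X V2) w'" "mso_sat asat (\<lambda>i. [w' i]) (dec1 w') (dec2 w') b"
    unfolding WF_def proj_def LL_def by blast
  define S where "S = dec2 w' X"
  have d2: "dec2 w' = (dec2 w)(X := S)"
  proof
    fix Y show "dec2 w' Y = ((dec2 w)(X := S)) Y"
      using agree_dec2[OF ag, of Y] unfolding S_def by (cases "Y = X") auto
  qed
  have d1: "dec1 w' = dec1 w"
  proof
    fix y show "dec1 w' y = dec1 w y" using agree_dec1[OF ag, of y] by simp
  qed
  have "mso_sat asat (\<lambda>i. [w i]) (dec1 w) ((dec2 w)(X := S)) b"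
    using w'(2) agree_sat[OF ag] d1 d2 by simp
  thus "w \<in> ?L" using wf unfolding LL_def by auto
qed

lemma main_recog: "finite V1 \<Longrightarrow> fv1 \<psi> \<subseteq> V1 \<Longrightarrow> recog (LL P V1 V2 \<psi>)"
proof (induction \<psi> arbitrary: V1 V2)
  case (Zero x)
  show ?case using Zero.prems
    by (subst LL_atomic(1)[of x V1 P V2]) (auto intro!: recog_inter recog_WF recog_E0)
next
  case (Eq x y)
  show ?case using Eq.prems
    by (subst LL_atomic(2)[of x V1 y P V2]) (auto intro!: recog_inter recog_WF recog_E1)
next
  case (Less x y)
  show ?case using Less.prems
    by (subst LL_atomic(3)[of x V1 y P V2]) (auto intro!: recog_inter recog_WF recog_ELess)
next
  case (Succ x y)
  show ?case using Succ.prems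
    by (subst LL_atomic(4)[of x V1 y P V2]) (auto intro!: recog_inter recog_WF recog_ESucc)
next
  case (Pred \<phi> x)
  show ?case using Pred.prems
    by (subst LL_atomic(5)[of x V1 P V2 \<phi>]) (auto intro!: recog_inter recog_WF recog_E1)
next
  case (Mem x X)
  show ?case using Mem.prems
    by (subst LL_atomic(6)[of x V1 P V2 X]) (auto intro!: recog_inter recog_WF recog_E1)
next
  case (Neg a) thus ?case unfolding LL_Neg by (simp add: recog_inter recog_WF recog_compl)
next
  case (Conj a b) thus ?case unfolding LL_Conj by (simp add: recog_inter)
next
  case (Disj a b) thus ?case unfolding LL_Disj by (simp add: recog_union)
next
  case (Ex1 x a)
  have "recog (LL P (insert x V1) V2 a)" using Ex1.prems by (intro Ex1.IH) auto
  thus ?case unfolding LL_Ex1 using Ex1.prems by (simp add: recog_inter recog_WF recog_proj)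
next
  case (All1 x a)
  have "recog (LL P (insert x V1) V2 a)" using All1.prems by (intro All1.IH) auto
  hence "recog (LL P (insert x V1) V2 (Neg a))" unfolding LL_Neg using All1.prems
    by (simp add: recog_inter recog_WF recog_compl)
  hence "recog (LL P V1 V2 (Ex1 x (Neg a)))" unfolding LL_Ex1 using All1.prems
    by (simp add: recog_inter recog_WF recog_proj)
  thus ?case unfolding LL_All1 using All1.prems by (simp add: recog_inter recog_WF recog_compl)
next
  case (Ex2 X a)
  have "recog (LL P V1 (insert X V2) a)" using Ex2.prems by (intro Ex2.IH) auto
  thus ?case unfolding LL_Ex2 using Ex2.prems by (simp add: recog_inter recog_WF recog_proj)
next
  case (All2 X a)
  have "recog (LL P V1 (insert X V2) a)" using All2.prems by (intro All2.IH) auto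
  hence "recog (LL P V1 (insert X V2) (Neg a))" unfolding LL_Neg using All2.prems
    by (simp add: recog_inter recog_WF recog_compl)
  hence "recog (LL P V1 V2 (Ex2 X (Neg a)))" unfolding LL_Ex2 using All2.prems
    by (simp add: recog_inter recog_WF recog_proj)
  thus ?case unfolding LL_All2 using All2.prems by (simp add: recog_inter recog_WF recog_compl)
qed



definition step :: "('a list \<Rightarrow> 'a list set) \<Rightarrow> 'a list set \<Rightarrow> 'a \<Rightarrow> 'a list set" where
  "step k C a = k ((SOME u. k u = C) @ [a])"

lemma step_k: "congr k \<Longrightarrow> step k (k u) a = k (u @ [a])"
proof -
  assume c: "congr k"
  have "k (SOME u'. k u' = k u) = k u" by (rule someI[of "\<lambda>u'. k u' = k u" u]) (rule refl)
  thus ?thesis using c unfolding step_def congr_def by blast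
qed

definition good :: "('a list \<Rightarrow> 'a list set) \<Rightarrow> (nat \<Rightarrow> 'a) set \<Rightarrow> 'a list set \<Rightarrow> 'a list set \<Rightarrow> bool" where
  "good k L s e \<longleftrightarrow> (\<exists>w c. fct c \<and> k (seg w 0 (c 1)) = s \<and>
      (\<forall>j. k (seg w (c (Suc j)) (c (Suc (Suc j)))) = e) \<and> w \<in> L)"

type_synonym 'a st = "bool \<times> 'a list set \<times> 'a list set \<times> bool"

definition Dl :: "('a list \<Rightarrow> 'a list set) \<Rightarrow> (nat \<Rightarrow> 'a) set \<Rightarrow> 'a st \<Rightarrow> 'a \<Rightarrow> 'a st \<Rightarrow> bool" where
  "Dl k L q a q' \<longleftrightarrow> (case q of (p, C, e, f) \<Rightarrow>
     if \<not> p then q' = (False, step k C a, k [], False) \<or> (\<exists>e'. good k L (step k C a) e' \<and> q' = (True, k [], e', True))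
     else q' = (True, step k C a, e, False) \<or> (step k C a = e \<and> q' = (True, k [], e, True)))"

definition q0 :: "('a list \<Rightarrow> 'a list set) \<Rightarrow> 'a st" where
  "q0 k = (False, k [], k [], False)"

definition Acc :: "'a st \<Rightarrow> bool" where
  "Acc q \<longleftrightarrow> fst q \<and> snd (snd (snd q))"

definition accepts :: "('s \<Rightarrow> 'a \<Rightarrow> 's \<Rightarrow> bool) \<Rightarrow> 's \<Rightarrow> ('s \<Rightarrow> bool) \<Rightarrow> (nat \<Rightarrow> 'a) \<Rightarrow> bool" where
  "accepts D q F w \<longleftrightarrow> (\<exists>\<rho>. \<rho> 0 = q \<and> (\<forall>i. D (\<rho> i) (w i) (\<rho> (Suc i))) \<and> (\<exists>\<^sub>\<infinity>i. F (\<rho> i)))"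

lemma ramsey_fact:
  fixes k :: "'a list \<Rightarrow> 'c"
  assumes fin: "finite (range k)"
  shows "\<exists>c e. fct c \<and> (\<forall>j. k (seg w (c (Suc j)) (c (Suc (Suc j)))) = e)"
proof -
  obtain g :: "'c \<Rightarrow> nat" and n where g: "g ` range k = {i. i < n}" "inj_on g (range k)"
    using finite_imp_inj_to_nat_seg[OF fin] by blast
  define f where "f X = g (k (seg w (Min X) (Max X)))" for X :: "nat set"
  have Zinf: "infinite {i::nat. 0 < i}"
    unfolding infinite_nat_iff_unbounded by auto
  have part: "\<forall>x\<in>{i::nat. 0 < i}. \<forall>y\<in>{i. 0 < i}. x \<noteq> y \<longrightarrow> f {x, y} < n"
    using g(1) unfolding f_def by blast
  obtain Y t where Y: "Y \<subseteq> {i. 0 < i}" "infinite Y" "t < n"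
    "\<forall>x\<in>Y. \<forall>y\<in>Y. x \<noteq> y \<longrightarrow> f {x, y} = t"
    using Ramsey2[OF Zinf part] by blast
  define c where "c j = (case j of 0 \<Rightarrow> 0 | Suc j' \<Rightarrow> enumerate Y j')" for j
  have c: "fct c" unfolding fct_def
  proof
    show "strict_mono c" unfolding strict_mono_Suc_iff
    proof
      fix j show "c j < c (Suc j)"
      proof (cases j)
        case 0 thus ?thesis using Y(1) enumerate_in_set[OF Y(2), of 0] unfolding c_def by auto
      next
        case (Suc j') thus ?thesis using enumerate_step[OF Y(2)] unfolding c_def by simp
      qed
    qed
    show "c 0 = 0" unfolding c_def by simp
  qed
  have key: "g (k (seg w (enumerate Y j) (enumerate Y (Suc j)))) = t" for j
  proof -
    let ?x = "enumerate Y j" and ?y = "enumerate Y (Suc j)"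
    have xy: "?x < ?y" "?x \<in> Y" "?y \<in> Y" using enumerate_step[OF Y(2)] enumerate_in_set[OF Y(2)] by auto
    have "f {?x, ?y} = t" using Y(4) xy by auto
    moreover have "Min {?x, ?y} = ?x" "Max {?x, ?y} = ?y" using xy(1) by auto
    ultimately show ?thesis unfolding f_def by simp
  qed
  have "k (seg w (c (Suc j)) (c (Suc (Suc j)))) = k (seg w (c 1) (c 2))" for j
  proof -
    have "g (k (seg w (c (Suc j)) (c (Suc (Suc j))))) = g (k (seg w (c 1) (c 2)))"
      using key[of j] key[of 0] unfolding c_def by (simp add: numeral_2_eq_2)
    thus ?thesis using g(2) by (meson inj_onD rangeI)
  qed
  thus ?thesis using c by blast
qed

lemma complete:
  assumes fin: "finite (range k)" and cg: "congr k" and wL: "w \<in> L"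
  shows "accepts (Dl k L) (q0 k) Acc w"
proof -
  obtain c e where c: "fct c" and ce: "\<forall>j. k (seg w (c (Suc j)) (c (Suc (Suc j)))) = e"
    using ramsey_fact[OF fin] by blast
  have gd: "good k L (k (seg w 0 (c 1))) e" unfolding good_def using c ce wL by blast
  define \<rho> where "\<rho> i = (if i < c 1 then (False, k (seg w 0 i), k [], False)
      else (True, k (seg w (c (blk c i)) i), e, i = c (blk c i)))" for i
  have c0: "c 0 = 0" and sm: "strict_mono c" using c by (auto simp: fct_def)
  have c1pos: "0 < c 1" using sm c0 by (metis strict_mono_less zero_less_one)
  have cSuc: "c j < c (Suc j)" for j using sm by (simp add: strict_mono_Suc_iff)
  have r0: "\<rho> 0 = q0 k" unfolding \<rho>_def q0_def using c1pos by (simp add: seg_def)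
  have tr: "Dl k L (\<rho> i) (w i) (\<rho> (Suc i))" for i
  proof (cases "Suc i < c 1")
    case True
    hence "\<rho> i = (False, k (seg w 0 i), k [], False)" "\<rho> (Suc i) = (False, k (seg w 0 (Suc i)), k [], False)"
      unfolding \<rho>_def by auto
    moreover have "step k (k (seg w 0 i)) (w i) = k (seg w 0 (Suc i))" using step_k[OF cg] seg_Suc[of 0 i w] by simp
    ultimately show ?thesis unfolding Dl_def by simp
  next
    case False
    show ?thesis
    proof (cases "Suc i = c 1")
      case True
      have "blk c (Suc i) = 1" using blk_unique[OF c, of 1 "Suc i"] True cSuc[of 1] by simp
      hence "\<rho> (Suc i) = (True, k [], e, True)" unfolding \<rho>_def using True by (simp add: seg_def)
      moreover have "\<rho> i = (False, k (seg w 0 i), k [], False)" unfolding \<rho>_def using True by simp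
      moreover have "step k (k (seg w 0 i)) (w i) = k (seg w 0 (c 1))" using step_k[OF cg] seg_Suc[of 0 i w] True by simp
      ultimately show ?thesis unfolding Dl_def using gd by auto
    next
      case False2: False
      hence ge: "c 1 \<le> i" using False by simp
      define j where "j = blk c i"
      have bj: "c j \<le> i" "i < c (Suc j)" using blk_bounds[OF c] unfolding j_def by auto
      have "j \<noteq> 0" using bj ge by (cases j) auto
      then obtain j0 where j0: "j = Suc j0" by (cases j) auto
      have ri: "\<rho> i = (True, k (seg w (c j) i), e, i = c j)" unfolding \<rho>_def j_def using ge by simp
      show ?thesis
      proof (cases "Suc i < c (Suc j)")
        case True
        have "blk c (Suc i) = j" using blk_unique[OF c] bj True by simp
        hence "\<rho> (Suc i) = (True, k (seg w (c j) (Suc i)), e, False)" unfolding \<rho>_def using ge bj by auto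
        moreover have "step k (k (seg w (c j) i)) (w i) = k (seg w (c j) (Suc i))"
          using step_k[OF cg] seg_Suc[OF bj(1), of w] by simp
        ultimately show ?thesis using ri unfolding Dl_def by simp
      next
        case False
        hence eqS: "Suc i = c (Suc j)" using bj by simp
        have "blk c (Suc i) = Suc j" using blk_unique[OF c, of "Suc j"] eqS cSuc[of "Suc j"] by simp
        hence "\<rho> (Suc i) = (True, k [], e, True)" unfolding \<rho>_def using ge eqS by (simp add: seg_def)
        moreover have "step k (k (seg w (c j) i)) (w i) = e"
          using step_k[OF cg] seg_Suc[OF bj(1), of w] eqS ce j0 by (metis (no_types))
        ultimately show ?thesis using ri unfolding Dl_def by simp
      qed
    qed
  qed
  have inf: "\<exists>\<^sub>\<infinity>i. Acc (\<rho> i)"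
    unfolding INFM_nat
  proof
    fix m
    have "m < c (Suc m)" using fct_ge[OF c, of "Suc m"] by simp
    moreover have "Acc (\<rho> (c (Suc m)))"
    proof -
      have b: "blk c (c (Suc m)) = Suc m" using blk_unique[OF c, of "Suc m"] cSuc[of "Suc m"] by simp
      have "c 1 \<le> c (Suc m)" using fct_mono[OF c] by simp
      thus ?thesis unfolding \<rho>_def Acc_def using b by simp
    qed
    ultimately show "\<exists>n>m. Acc (\<rho> n)" by blast
  qed
  show ?thesis unfolding accepts_def using r0 tr inf by blast
qed



lemma Dl_True:
  "Dl k L (True, C, e, f) a q' \<longleftrightarrow> q' = (True, step k C a, e, False) \<or> (step k C a = e \<and> q' = (True, k [], e, True))"
  unfolding Dl_def by simp

lemma Dl_False:
  "Dl k L (False, C, e, f) a q' \<longleftrightarrow> q' = (False, step k C a, k [], False) \<or> (\<exists>e'. good k L (step k C a) e' \<and> q' = (True, k [], e', True))"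
  unfolding Dl_def by simp

lemma sound:
  assumes cg: "congr k" and sat: "saturates k L"
    and acc: "accepts (Dl k L) (q0 k) Acc w"
  shows "w \<in> L"
proof -
  obtain \<rho> where r0: "\<rho> 0 = q0 k" and tr: "\<And>i. Dl k L (\<rho> i) (w i) (\<rho> (Suc i))"
    and inf: "\<exists>\<^sub>\<infinity>i. Acc (\<rho> i)"
    using acc unfolding accepts_def by blast
  have exP: "\<exists>i. fst (\<rho> i)" using INFM_EX[OF inf] unfolding Acc_def by blast
  define p where "p = (LEAST i. fst (\<rho> i))"
  have fp: "fst (\<rho> p)" using LeastI_ex[OF exP] unfolding p_def .
  have nfp: "\<not> fst (\<rho> i)" if "i < p" for i using not_less_Least[OF that[unfolded p_def]] .
  have pmin: "p \<le> i" if "fst (\<rho> i)" for i unfolding p_def using that by (rule Least_le)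
  have p0: "p \<noteq> 0" using fp r0 unfolding q0_def by (cases p) auto
  have pre: "i < p \<Longrightarrow> \<rho> i = (False, k (seg w 0 i), k [], False)" for i
  proof (induction i)
    case 0 thus ?case using r0 unfolding q0_def by (simp add: seg_def)
  next
    case (Suc i)
    hence IH: "\<rho> i = (False, k (seg w 0 i), k [], False)" by simp
    have "\<not> fst (\<rho> (Suc i))" using nfp Suc.prems by blast
    moreover have "step k (k (seg w 0 i)) (w i) = k (seg w 0 (Suc i))"
      using step_k[OF cg] seg_Suc[of 0 i w] by simp
    moreover have "Dl k L (False, k (seg w 0 i), k [], False) (w i) (\<rho> (Suc i))" using tr[of i] IH by simp
    hence "\<rho> (Suc i) = (False, step k (k (seg w 0 i)) (w i), k [], False) \<or>
      (\<exists>e'. good k L (step k (k (seg w 0 i)) (w i)) e' \<and> \<rho> (Suc i) = (True, k [], e', True))"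
      by (simp only: Dl_False)
    ultimately show ?case by auto
  qed
  obtain p' where pp: "p = Suc p'" using p0 by (cases p) auto
  have rp': "\<rho> p' = (False, k (seg w 0 p'), k [], False)" using pre pp by simp
  have stp: "step k (k (seg w 0 p')) (w p') = k (seg w 0 p)"
    using step_k[OF cg] seg_Suc[of 0 p' w] pp by simp
  have "Dl k L (False, k (seg w 0 p'), k [], False) (w p') (\<rho> p)" using tr[of p'] rp' pp by simp
  hence "\<rho> p = (False, k (seg w 0 p), k [], False) \<or>
      (\<exists>e'. good k L (k (seg w 0 p)) e' \<and> \<rho> p = (True, k [], e', True))"
    unfolding Dl_False stp .
  then obtain e where gd: "good k L (k (seg w 0 p)) e" and rp: "\<rho> p = (True, k [], e, True)"
    using fp by auto
  have post: "p \<le> i \<Longrightarrow> \<exists>C f. \<rho> i = (True, C, e, f)" for i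
  proof (induction i rule: dec_induct)
    case base thus ?case using rp by blast
  next
    case (step i)
    then obtain C f where ri: "\<rho> i = (True, C, e, f)" by blast
    have "Dl k L (True, C, e, f) (w i) (\<rho> (Suc i))" using tr[of i] ri by simp
    hence "\<rho> (Suc i) = (True, step k C (w i), e, False) \<or> (step k C (w i) = e \<and> \<rho> (Suc i) = (True, k [], e, True))"
      by (simp only: Dl_True)
    thus ?case by blast
  qed
  define R where "R = {i. p \<le> i \<and> snd (snd (snd (\<rho> i)))}"
  have "{i. Acc (\<rho> i)} \<subseteq> R" unfolding R_def Acc_def using pmin by auto
  moreover have "infinite {i. Acc (\<rho> i)}" using inf by (simp add: INFM_iff_infinite)
  ultimately have infR: "infinite R" using finite_subset by blast
  have pR: "p \<in> R" unfolding R_def using rp by simp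
  have Lp: "(LEAST n. n \<in> R) = p" by (rule Least_equality) (use pR in \<open>auto simp: R_def\<close>)
  have reset0: "fst (snd (\<rho> i)) = k []" if "i \<in> R" for i
  proof (cases "i = p")
    case True thus ?thesis using rp by simp
  next
    case False
    hence "p < i" using that unfolding R_def by simp
    then obtain i' where i': "i = Suc i'" "p \<le> i'" by (cases i) auto
    obtain C f where ri: "\<rho> i' = (True, C, e, f)" using post[OF i'(2)] by blast
    have "Dl k L (True, C, e, f) (w i') (\<rho> i)" using tr[of i'] ri i'(1) by simp
    hence "\<rho> i = (True, step k C (w i'), e, False) \<or> (step k C (w i') = e \<and> \<rho> i = (True, k [], e, True))"
      by (simp only: Dl_True)
    hence "\<rho> i = (True, step k C (w i'), e, False) \<or> \<rho> i = (True, k [], e, True)" by blast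
    moreover have "snd (snd (snd (\<rho> i)))" using that unfolding R_def by simp
    ultimately show ?thesis by auto
  qed
  have blockinv: "(\<forall>m. r < m \<and> m \<le> r + t \<longrightarrow> m \<notin> R) \<Longrightarrow> fst (snd (\<rho> (r + t))) = k (seg w r (r + t))"
    if rR: "r \<in> R" for r t
  proof (induction t)
    case 0 thus ?case using reset0[OF rR] by simp
  next
    case (Suc t)
    have IH: "fst (snd (\<rho> (r + t))) = k (seg w r (r + t))" using Suc by auto
    have prt: "p \<le> r + t" using rR unfolding R_def by simp
    obtain C f where rt: "\<rho> (r + t) = (True, C, e, f)" using post[OF prt] by blast
    have notR: "Suc (r + t) \<notin> R" using Suc.prems by auto
    hence "\<not> snd (snd (snd (\<rho> (Suc (r + t)))))" using prt unfolding R_def by simp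
    moreover have "Dl k L (True, C, e, f) (w (r + t)) (\<rho> (Suc (r + t)))" using tr[of "r + t"] rt by simp
    hence "\<rho> (Suc (r + t)) = (True, step k C (w (r + t)), e, False) \<or> (step k C (w (r + t)) = e \<and> \<rho> (Suc (r + t)) = (True, k [], e, True))"
      by (simp only: Dl_True)
    ultimately have "\<rho> (Suc (r + t)) = (True, step k C (w (r + t)), e, False)" by auto
    moreover have "step k C (w (r + t)) = k (seg w r (Suc (r + t)))"
      using IH rt step_k[OF cg] seg_Suc[of r "r + t" w] by simp
    ultimately show ?case by simp
  qed
  have consec: "k (seg w r r') = e"
    if rR: "r \<in> R" and r'R: "r' \<in> R" and lt: "r < r'" and nb: "\<forall>m. r < m \<and> m < r' \<longrightarrow> m \<notin> R" for r r'
  proof -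
    obtain t where t: "r' = Suc (r + t)" using lt by (metis add_Suc_right less_iff_Suc_add)
    have D: "fst (snd (\<rho> (r + t))) = k (seg w r (r + t))"
      using blockinv[OF rR] nb t by auto
    have prt: "p \<le> r + t" using rR unfolding R_def by simp
    obtain C f where rt: "\<rho> (r + t) = (True, C, e, f)" using post[OF prt] by blast
    have fl: "snd (snd (snd (\<rho> r')))" using r'R unfolding R_def by simp
    have "Dl k L (True, C, e, f) (w (r + t)) (\<rho> r')" using tr[of "r + t"] rt t by simp
    hence "\<rho> r' = (True, step k C (w (r + t)), e, False) \<or> (step k C (w (r + t)) = e \<and> \<rho> r' = (True, k [], e, True))"
      by (simp only: Dl_True)
    hence "step k C (w (r + t)) = e" using fl by auto
    moreover have "step k C (w (r + t)) = k (seg w r r')"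
      using D rt step_k[OF cg] seg_Suc[of r "r + t" w] t by simp
    ultimately show ?thesis by simp
  qed
  define c where "c j = (case j of 0 \<Rightarrow> 0 | Suc j' \<Rightarrow> enumerate R j')" for j
  have e0: "enumerate R 0 = p" using Lp by (simp add: enumerate_0)
  have c: "fct c" unfolding fct_def
  proof
    show "strict_mono c" unfolding strict_mono_Suc_iff
    proof
      fix j show "c j < c (Suc j)"
      proof (cases j)
        case 0 thus ?thesis using e0 p0 unfolding c_def by simp
      next
        case (Suc j') thus ?thesis using enumerate_step[OF infR] unfolding c_def by simp
      qed
    qed
    show "c 0 = 0" unfolding c_def by simp
  qed
  have blocks: "k (seg w (c (Suc j)) (c (Suc (Suc j)))) = e" for j
  proof -
    let ?x = "enumerate R j" and ?y = "enumerate R (Suc j)"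
    have nb: "\<forall>m. ?x < m \<and> m < ?y \<longrightarrow> m \<notin> R"
    proof (intro allI impI)
      fix m assume m: "?x < m \<and> m < ?y"
      show "m \<notin> R"
      proof
        assume "m \<in> R"
        then obtain t where "m = enumerate R t" using range_enumerate[OF infR] by blast
        hence "j < t" "t < Suc j" using m enumerate_mono_iff[OF infR] by auto
        thus False by simp
      qed
    qed
    have "k (seg w ?x ?y) = e"
      using consec[OF enumerate_in_set[OF infR] enumerate_in_set[OF infR] enumerate_step[OF infR] nb] .
    thus ?thesis unfolding c_def by simp
  qed
  obtain w0 c0 where w0: "fct c0" "k (seg w0 0 (c0 1)) = k (seg w 0 p)"
    "\<forall>j. k (seg w0 (c0 (Suc j)) (c0 (Suc (Suc j)))) = e" "w0 \<in> L"
    using gd unfolding good_def by blast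
  have "\<forall>j. k (seg w0 (c0 j) (c0 (Suc j))) = k (seg w (c j) (c (Suc j)))"
  proof
    fix j show "k (seg w0 (c0 j) (c0 (Suc j))) = k (seg w (c j) (c (Suc j)))"
    proof (cases j)
      case 0
      have "c0 0 = 0" using w0(1) by (simp add: fct_def)
      thus ?thesis using 0 w0(2) e0 unfolding c_def by simp
    next
      case (Suc j') thus ?thesis using w0(3) blocks by simp
    qed
  qed
  thus ?thesis using sat w0(1) c w0(4) unfolding saturates_def by blast
qed



lemma lc_ne: "logic_closed Phi sat \<Longrightarrow> \<exists>\<phi>. \<phi> \<in> Phi n"
  unfolding logic_closed_def by blast

lemma lc_neg: "logic_closed Phi sat \<Longrightarrow> \<phi> \<in> Phi n \<Longrightarrow> \<exists>\<chi>\<in>Phi n. \<forall>ms\<in>tuples n. sat \<chi> ms \<longleftrightarrow> \<not> sat \<phi> ms"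
  unfolding logic_closed_def by blast

lemma lc_conj: "logic_closed Phi sat \<Longrightarrow> \<phi> \<in> Phi n \<Longrightarrow> \<psi> \<in> Phi n \<Longrightarrow>
    \<exists>\<chi>\<in>Phi n. \<forall>ms\<in>tuples n. sat \<chi> ms \<longleftrightarrow> sat \<phi> ms \<and> sat \<psi> ms"
  unfolding logic_closed_def by blast

lemma lc_disj: "logic_closed Phi sat \<Longrightarrow> \<phi> \<in> Phi n \<Longrightarrow> \<psi> \<in> Phi n \<Longrightarrow>
    \<exists>\<chi>\<in>Phi n. \<forall>ms\<in>tuples n. sat \<chi> ms \<longleftrightarrow> sat \<phi> ms \<or> sat \<psi> ms"
  unfolding logic_closed_def by blast

lemma chi_exists:
  fixes sat :: "'f \<Rightarrow> 'm list \<Rightarrow> bool"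
  assumes lc: "logic_closed Phi sat" and fin: "finite P"
  shows "P \<subseteq> Phi n \<Longrightarrow> B \<subseteq> P \<Longrightarrow> \<exists>\<chi>\<in>Phi n. \<forall>ms\<in>tuples n. sat \<chi> ms \<longleftrightarrow> (\<forall>\<phi>\<in>P. sat \<phi> ms \<longleftrightarrow> \<phi> \<in> B)"
  using fin
proof (induction P arbitrary: B rule: finite_induct)
  case empty
  obtain \<phi>0 where p0: "\<phi>0 \<in> Phi n" using lc_ne[OF lc] by blast
  obtain \<chi>1 where c1: "\<chi>1 \<in> Phi n" "\<forall>ms\<in>tuples n. sat \<chi>1 ms \<longleftrightarrow> \<not> sat \<phi>0 ms"
    using lc_neg[OF lc p0] by blast
  obtain \<chi>2 where c2: "\<chi>2 \<in> Phi n" "\<forall>ms\<in>tuples n. sat \<chi>2 ms \<longleftrightarrow> sat \<phi>0 ms \<or> sat \<chi>1 ms"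
    using lc_disj[OF lc p0 c1(1)] by blast
  show ?case using c1 c2 by auto
next
  case (insert \<phi> P)
  have pP: "\<phi> \<in> Phi n" "P \<subseteq> Phi n" using insert.prems by auto
  obtain \<chi> where c: "\<chi> \<in> Phi n" "\<forall>ms\<in>tuples n. sat \<chi> ms \<longleftrightarrow> (\<forall>\<psi>\<in>P. sat \<psi> ms \<longleftrightarrow> \<psi> \<in> B - {\<phi>})"
    using insert.IH[OF pP(2), of "B - {\<phi>}"] insert.prems by auto
  obtain n\<phi> where cn: "n\<phi> \<in> Phi n" "\<forall>ms\<in>tuples n. sat n\<phi> ms \<longleftrightarrow> \<not> sat \<phi> ms"
    using lc_neg[OF lc pP(1)] by blast
  define lit where "lit = (if \<phi> \<in> B then \<phi> else n\<phi>)"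
  have lit: "lit \<in> Phi n" "\<forall>ms\<in>tuples n. sat lit ms \<longleftrightarrow> (sat \<phi> ms \<longleftrightarrow> \<phi> \<in> B)"
    unfolding lit_def using pP cn by auto
  obtain \<chi>' where c': "\<chi>' \<in> Phi n" "\<forall>ms\<in>tuples n. sat \<chi>' ms \<longleftrightarrow> sat \<chi> ms \<and> sat lit ms"
    using lc_conj[OF lc c(1) lit(1)] by blast
  have "\<forall>ms\<in>tuples n. sat \<chi>' ms \<longleftrightarrow> (\<forall>\<psi>\<in>insert \<phi> P. sat \<psi> ms \<longleftrightarrow> \<psi> \<in> B)"
  proof
    fix ms :: "'m list" assume ms: "ms \<in> tuples n"
    have e: "\<forall>\<psi>\<in>P. (\<psi> \<in> B - {\<phi>}) = (\<psi> \<in> B)" using insert.hyps(2) by auto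
    show "sat \<chi>' ms \<longleftrightarrow> (\<forall>\<psi>\<in>insert \<phi> P. sat \<psi> ms \<longleftrightarrow> \<psi> \<in> B)"
      using c'(2) c(2) lit(2) ms e by auto
  qed
  thus ?case using c'(1) by blast
qed

lemma finite_preds: "finite (preds \<psi>)"
  by (induction \<psi>) auto

lemma accepts_iff:
  assumes "finite (range k)" "congr k" "saturates k L"
  shows "accepts (Dl k L) (q0 k) Acc w \<longleftrightarrow> w \<in> L"
  using complete[OF assms(1,2)] sound[OF assms(2,3)] by blast

theorem mainTheorem9:
  fixes Phi :: "nat \<Rightarrow> 'f set" and sat :: "'f \<Rightarrow> 'm list \<Rightarrow> bool"
    and n :: nat and \<psi> :: "'f mso"
  assumes "logic_closed Phi sat"
    and "mso_sentence \<psi>"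
    and "preds \<psi> \<subseteq> Phi n"
  shows "\<exists>B. wf_buechi Phi n B \<and> mso_lang sat n \<psi> = buechi_lang sat n B"
proof -
  note lc = assms(1)
  define P where "P = preds \<psi>"
  have finP: "finite P" unfolding P_def by (rule finite_preds)
  have PP: "P \<subseteq> Phi n" unfolding P_def using assms(3) .
  have fv: "fv1 \<psi> = {}" "fv2 \<psi> = {}" using assms(2) unfolding mso_sentence_def by auto
  define L where "L = LL P {} {} \<psi>"
  have "recog L" unfolding L_def by (rule main_recog) (simp_all add: fv)
  then obtain k :: "'f atom set list \<Rightarrow> 'f atom set list set"
    where k: "finite (range k)" "congr k" "saturates k L" unfolding recog_def by blast
  define abst where "abst \<alpha> = (\<lambda>i. (Inl ` {\<phi>\<in>P. sat \<phi> (\<alpha> i)} :: 'f atom set))" for \<alpha> :: "nat \<Rightarrow> 'm list"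
  have lang_iff: "\<alpha> \<in> mso_lang sat n \<psi> \<longleftrightarrow> abst \<alpha> \<in> L" if \<alpha>: "\<alpha> \<in> words n" for \<alpha>
  proof -
    have wf: "wf P {} {} (abst \<alpha>)" unfolding wf_def AA_def abst_def by auto
    have "mso_sat asat (\<lambda>i. [abst \<alpha> i]) (dec1 (abst \<alpha>)) (dec2 (abst \<alpha>)) \<psi> = mso_sat sat \<alpha> (\<lambda>_. 0) (\<lambda>_. {}) \<psi>"
      by (rule mso_sat_cong) (auto simp: fv asat_def abst_def P_def)
    thus ?thesis using \<alpha> wf unfolding mso_lang_def L_def LL_def by simp
  qed
  define S where "S = (UNIV :: bool set) \<times> range k \<times> range k \<times> (UNIV :: bool set)"
  have finS: "finite S" unfolding S_def using k(1) by simp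
  obtain enc :: "'f atom set st \<Rightarrow> nat" where inj: "inj_on enc S"
    using finite_imp_inj_to_nat_seg[OF finS] by blast
  define chi where "chi B = (SOME \<chi>. \<chi> \<in> Phi n \<and> (\<forall>ms\<in>tuples n. sat \<chi> ms \<longleftrightarrow> (\<forall>\<phi>\<in>P. sat \<phi> ms \<longleftrightarrow> \<phi> \<in> B)))" for B
  have chi: "chi B \<in> Phi n \<and> (\<forall>ms\<in>tuples n. sat (chi B) ms \<longleftrightarrow> (\<forall>\<phi>\<in>P. sat \<phi> ms \<longleftrightarrow> \<phi> \<in> B))"
    if "B \<subseteq> P" for B
  proof -
    have "\<exists>\<chi>. \<chi> \<in> Phi n \<and> (\<forall>ms\<in>tuples n. sat \<chi> ms \<longleftrightarrow> (\<forall>\<phi>\<in>P. sat \<phi> ms \<longleftrightarrow> \<phi> \<in> B))"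
      using chi_exists[OF lc finP PP that] by blast
    thus ?thesis unfolding chi_def by (rule someI_ex)
  qed
  define T where "T = {(enc q, chi B, enc q') | q B q'. q \<in> S \<and> B \<subseteq> P \<and> q' \<in> S \<and> Dl k L q (Inl ` B) q'}"
  define Bu :: "'f buechi" where "Bu = (| states = enc ` S, init = enc (q0 k), trans = T, final = enc ` {q\<in>S. Acc q} |)"
  have q0S: "q0 k \<in> S" unfolding q0_def S_def by auto
  have DlS: "q' \<in> S" if "Dl k L q a q'" "q \<in> S" for q a q'
  proof -
    obtain p C e f where q: "q = (p, C, e, f)" by (cases q) auto
    have st: "step k C a \<in> range k" unfolding step_def by simp
    have gd: "e' \<in> range k" if "good k L s e'" for s e'
      using that unfolding good_def by (metis rangeI)
    have "e \<in> range k" using that(2) unfolding q S_def by simp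
    thus ?thesis using that(1) st gd unfolding q Dl_def S_def by (cases p) (auto split: if_splits)
  qed
  have wfb: "wf_buechi Phi n Bu"
  proof -
    have "T \<subseteq> (\<lambda>(q, B, q'). (enc q, chi B, enc q')) ` (S \<times> Pow P \<times> S)"
    proof
      fix t assume "t \<in> T"
      then obtain q B q' where "t = (enc q, chi B, enc q')" "q \<in> S" "B \<subseteq> P" "q' \<in> S" unfolding T_def by blast
      thus "t \<in> (\<lambda>(q, B, q'). (enc q, chi B, enc q')) ` (S \<times> Pow P \<times> S)"
        by (intro image_eqI[of _ _ "(q, B, q')"]) auto
    qed
    hence "finite T" using finS finP by (meson finite_Pow_iff finite_SigmaI finite_imageI finite_subset)
    moreover have "T \<subseteq> enc ` S \<times> Phi n \<times> enc ` S" unfolding T_def using chi by fastforce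
    ultimately show ?thesis unfolding wf_buechi_def Bu_def using finS q0S by auto
  qed
  have chi_iff: "sat (chi B) (\<alpha> i) \<longleftrightarrow> B = {\<phi>\<in>P. sat \<phi> (\<alpha> i)}" if "\<alpha> \<in> words n" "B \<subseteq> P" for \<alpha> i B
  proof -
    have "\<alpha> i \<in> tuples n" using that(1) unfolding words_def tuples_def by simp
    hence "sat (chi B) (\<alpha> i) \<longleftrightarrow> (\<forall>\<phi>\<in>P. sat \<phi> (\<alpha> i) \<longleftrightarrow> \<phi> \<in> B)" using chi[OF that(2)] by blast
    thus ?thesis using that(2) by auto
  qed
  have run_iff: "(\<exists>\<rho>. is_run sat Bu \<alpha> \<rho> \<and> (\<exists>\<^sub>\<infinity>i. \<rho> i \<in> final Bu)) \<longleftrightarrow> accepts (Dl k L) (q0 k) Acc (abst \<alpha>)"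
    if \<alpha>: "\<alpha> \<in> words n" for \<alpha>
  proof
    assume "\<exists>\<rho>. is_run sat Bu \<alpha> \<rho> \<and> (\<exists>\<^sub>\<infinity>i. \<rho> i \<in> final Bu)"
    then obtain \<rho> where ir: "is_run sat Bu \<alpha> \<rho>" and rf0: "\<exists>\<^sub>\<infinity>i. \<rho> i \<in> final Bu" by blast
    have r0: "\<rho> 0 = enc (q0 k)" using ir unfolding is_run_def Bu_def by simp
    have rt: "\<forall>i. \<exists>\<phi>. (\<rho> i, \<phi>, \<rho> (Suc i)) \<in> T \<and> sat \<phi> (\<alpha> i)"
      using ir unfolding is_run_def Bu_def by simp
    have rf: "\<exists>\<^sub>\<infinity>i. \<rho> i \<in> enc ` {q\<in>S. Acc q}" using rf0 unfolding Bu_def by simp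
    define \<sigma> where "\<sigma> i = inv_into S enc (\<rho> i)" for i
    have step_i: "\<rho> i \<in> enc ` S \<and> Dl k L (\<sigma> i) (abst \<alpha> i) (\<sigma> (Suc i))" for i
    proof -
      obtain \<phi> where "(\<rho> i, \<phi>, \<rho> (Suc i)) \<in> T" "sat \<phi> (\<alpha> i)" using rt by blast
      then obtain q B q' where h: "\<rho> i = enc q" "\<phi> = chi B" "\<rho> (Suc i) = enc q'" "q \<in> S" "B \<subseteq> P" "q' \<in> S"
        "Dl k L q (Inl ` B) q'" "sat (chi B) (\<alpha> i)" unfolding T_def by blast
      have "B = {\<phi>\<in>P. sat \<phi> (\<alpha> i)}" using chi_iff[OF \<alpha> h(5)] h(8) by simp
      hence "Inl ` B = abst \<alpha> i" unfolding abst_def by simp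
      moreover have "\<sigma> i = q" "\<sigma> (Suc i) = q'" unfolding \<sigma>_def using h inj by (auto simp: inv_into_f_f)
      ultimately show ?thesis using h by auto
    qed
    have "\<sigma> 0 = q0 k" unfolding \<sigma>_def using r0 q0S inj by (simp add: inv_into_f_f)
    moreover have "\<exists>\<^sub>\<infinity>i. Acc (\<sigma> i)"
    proof (rule INFM_mono[OF rf])
      fix i assume "\<rho> i \<in> enc ` {q\<in>S. Acc q}"
      then obtain q where "q \<in> S" "Acc q" "\<rho> i = enc q" by blast
      thus "Acc (\<sigma> i)" unfolding \<sigma>_def using inj by (simp add: inv_into_f_f)
    qed
    ultimately show "accepts (Dl k L) (q0 k) Acc (abst \<alpha>)" unfolding accepts_def using step_i by blast
  next
    assume "accepts (Dl k L) (q0 k) Acc (abst \<alpha>)"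
    then obtain \<sigma> where s0: "\<sigma> 0 = q0 k" and st: "\<And>i. Dl k L (\<sigma> i) (abst \<alpha> i) (\<sigma> (Suc i))"
      and sf: "\<exists>\<^sub>\<infinity>i. Acc (\<sigma> i)" unfolding accepts_def by blast
    have sS: "\<sigma> i \<in> S" for i
    proof (induction i)
      case 0 thus ?case using s0 q0S by simp
    next
      case (Suc j) thus ?case using DlS[OF st[of j]] by simp
    qed
    define \<rho> where "\<rho> i = enc (\<sigma> i)" for i
    have "is_run sat Bu \<alpha> \<rho>" unfolding is_run_def
    proof
      show "\<rho> 0 = init Bu" unfolding \<rho>_def Bu_def using s0 by simp
      show "\<forall>i. \<exists>\<phi>. (\<rho> i, \<phi>, \<rho> (Suc i)) \<in> trans Bu \<and> sat \<phi> (\<alpha> i)"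
      proof
        fix i
        define B where "B = {\<phi>\<in>P. sat \<phi> (\<alpha> i)}"
        have BP: "B \<subseteq> P" unfolding B_def by auto
        have "Inl ` B = abst \<alpha> i" unfolding B_def abst_def by simp
        hence D: "Dl k L (\<sigma> i) (Inl ` B) (\<sigma> (Suc i))" using st[of i] by simp
        have "(\<rho> i, chi B, \<rho> (Suc i)) \<in> T" unfolding T_def mem_Collect_eq \<rho>_def
          by (rule exI[of _ "\<sigma> i"], rule exI[of _ B], rule exI[of _ "\<sigma> (Suc i)"]) (simp add: sS BP D)
        moreover have "sat (chi B) (\<alpha> i)" using chi_iff[OF \<alpha> BP] B_def by simp
        moreover have "trans Bu = T" unfolding Bu_def by simp
        ultimately show "\<exists>\<phi>. (\<rho> i, \<phi>, \<rho> (Suc i)) \<in> trans Bu \<and> sat \<phi> (\<alpha> i)" by blast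
      qed
    qed
    moreover have "\<exists>\<^sub>\<infinity>i. \<rho> i \<in> final Bu"
    proof (rule INFM_mono[OF sf])
      fix i assume "Acc (\<sigma> i)"
      hence "\<sigma> i \<in> {q\<in>S. Acc q}" using sS by simp
      hence "enc (\<sigma> i) \<in> enc ` {q\<in>S. Acc q}" by (rule imageI)
      thus "\<rho> i \<in> final Bu" unfolding \<rho>_def Bu_def by simp
    qed
    ultimately show "\<exists>\<rho>. is_run sat Bu \<alpha> \<rho> \<and> (\<exists>\<^sub>\<infinity>i. \<rho> i \<in> final Bu)" by blast
  qed
  have "mso_lang sat n \<psi> = buechi_lang sat n Bu"
  proof (rule set_eqI)
    fix \<alpha>
    show "\<alpha> \<in> mso_lang sat n \<psi> \<longleftrightarrow> \<alpha> \<in> buechi_lang sat n Bu"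
    proof (cases "\<alpha> \<in> words n")
      case True
      have "\<alpha> \<in> mso_lang sat n \<psi> \<longleftrightarrow> accepts (Dl k L) (q0 k) Acc (abst \<alpha>)"
        using lang_iff[OF True] accepts_iff[OF k, of "abst \<alpha>"] by simp
      also have "\<dots> \<longleftrightarrow> (\<exists>\<rho>. is_run sat Bu \<alpha> \<rho> \<and> (\<exists>\<^sub>\<infinity>i. \<rho> i \<in> final Bu))"
        using run_iff[OF True] by simp
      also have "\<dots> \<longleftrightarrow> \<alpha> \<in> buechi_lang sat n Bu" unfolding buechi_lang_def using True by simp
      finally show ?thesis .
    next
      case False
      thus ?thesis unfolding mso_lang_def buechi_lang_def by simp
    qed
  qed
  thus ?thesis using wfb by blast
qed


end
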